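(* Two spatial matrices of the same size $m\times n\times q$ over a field $k$ are equivalent if and only if their regular parts are equivalent.
   Context: An $m\times n\times q$ spatial matrix $\mathbb A=[a_{ijk}]$ has entries in $k$. Two spatial matrices are equivalent if $a'_{i'j'k'}=\sum_{i,j,k}a_{ijk}r_{ii'}s_{jj'}t_{kk'}$ for nonsingular matrices $R=[r_{ii'}]$ ($m\times m$), $S=[s_{jj'}]$ ($n\times n$), $T=[t_{kk'}]$ ($q\times q$). Let $r_1$ be the dimension of the span of the matrices $[a_{ijk}]_{j,k}$ ($i=1,\dots,m$), $r_2$ that of $[a_{ijk}]_{i,k}$ ($j=1,\dots,n$), $r_3$ that of $[a_{ijk}]_{i,j}$ ($k=1,\dots,q$); $\mathrm{rank}\,\mathbb A=(r_1,r_2,r_3)$. $\mathbb A$ is regular if $\mathrm{rank}\,\mathbb A=(m,n,q)$. A regular part of $\mathbb A$ is a regular $r_1\times r_2\times r_3$ spatial matrix $\mathbb A'$ such that $\mathbb A$ is equivalent to $\mathbb A'\oplus\mathbb O$, where $\mathbb O$ is the zero $(m-r_1)\times(n-r_2)\times(q-r_3)$ spatial matrix and $\oplus$ denotes the block-diagonal spatial matrix (entries outside the two diagonal blocks are zero). *)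

theory Defs
  imports "HOL.Vector_Spaces" "HOL-Library.Function_Algebras" "Jordan_Normal_Form.Matrix"
begin

text \<open>An m x n x q spatial matrix over a field 'a is represented by a function
  nat => nat => nat => 'a; only the entries with indices i<m, j<n, k<q matter.\<close>
type_synonym 'a smat = "nat \<Rightarrow> nat \<Rightarrow> nat \<Rightarrow> 'a"

definition mscale :: "'a::field \<Rightarrow> (nat \<Rightarrow> nat \<Rightarrow> 'a) \<Rightarrow> (nat \<Rightarrow> nat \<Rightarrow> 'a)" where
  "mscale c M = (\<lambda>j k. c * M j k)"

definition span_dim :: "(nat \<Rightarrow> nat \<Rightarrow> 'a::field) set \<Rightarrow> nat" where
  "span_dim S = vector_space.dim mscale S"

definition slices1 :: "nat \<Rightarrow> nat \<Rightarrow> nat \<Rightarrow> 'a::field smat \<Rightarrow> (nat \<Rightarrow> nat \<Rightarrow> 'a) set" where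
  "slices1 m n q A = (\<lambda>i. \<lambda>j k. if j < n \<and> k < q then A i j k else 0) ` {..<m}"
definition slices2 :: "nat \<Rightarrow> nat \<Rightarrow> nat \<Rightarrow> 'a::field smat \<Rightarrow> (nat \<Rightarrow> nat \<Rightarrow> 'a) set" where
  "slices2 m n q A = (\<lambda>j. \<lambda>i k. if i < m \<and> k < q then A i j k else 0) ` {..<n}"
definition slices3 :: "nat \<Rightarrow> nat \<Rightarrow> nat \<Rightarrow> 'a::field smat \<Rightarrow> (nat \<Rightarrow> nat \<Rightarrow> 'a) set" where
  "slices3 m n q A = (\<lambda>k. \<lambda>i j. if i < m \<and> j < n then A i j k else 0) ` {..<q}"

definition srank :: "nat \<Rightarrow> nat \<Rightarrow> nat \<Rightarrow> 'a::field smat \<Rightarrow> nat \<times> nat \<times> nat" where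
  "srank m n q A = (span_dim (slices1 m n q A), span_dim (slices2 m n q A), span_dim (slices3 m n q A))"

definition sregular :: "nat \<Rightarrow> nat \<Rightarrow> nat \<Rightarrow> 'a::field smat \<Rightarrow> bool" where
  "sregular m n q A \<longleftrightarrow> srank m n q A = (m, n, q)"

definition sequiv :: "nat \<Rightarrow> nat \<Rightarrow> nat \<Rightarrow> 'a::field smat \<Rightarrow> 'a smat \<Rightarrow> bool" where
  "sequiv m n q A B \<longleftrightarrow>
     (\<exists>R S T. R \<in> carrier_mat m m \<and> invertible_mat R \<and>
              S \<in> carrier_mat n n \<and> invertible_mat S \<and>
              T \<in> carrier_mat q q \<and> invertible_mat T \<and>
              (\<forall>i'<m. \<forall>j'<n. \<forall>k'<q.
                 B i' j' k' = (\<Sum>i<m. \<Sum>j<n. \<Sum>k<q. A i j k * R $$ (i, i') * S $$ (j, j') * T $$ (k, k'))))"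

definition sdsum_zero :: "nat \<Rightarrow> nat \<Rightarrow> nat \<Rightarrow> 'a::field smat \<Rightarrow> 'a smat" where
  "sdsum_zero r1 r2 r3 A' = (\<lambda>i j k. if i < r1 \<and> j < r2 \<and> k < r3 then A' i j k else 0)"

definition regular_part :: "nat \<Rightarrow> nat \<Rightarrow> nat \<Rightarrow> 'a::field smat \<Rightarrow> nat \<Rightarrow> nat \<Rightarrow> nat \<Rightarrow> 'a smat \<Rightarrow> bool" where
  "regular_part m n q A r1 r2 r3 A' \<longleftrightarrow>
     srank m n q A = (r1, r2, r3) \<and> sregular r1 r2 r3 A' \<and>
     sequiv m n q A (sdsum_zero r1 r2 r3 A')"

end

theory Submission
  imports Defs
begin



interpretation ms: vector_space "mscale :: 'a::field \<Rightarrow> (nat\<Rightarrow>nat\<Rightarrow>'a) \<Rightarrow> _"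
  by unfold_locales (auto simp: mscale_def fun_eq_iff algebra_simps)

lemma span_dim_ms: "span_dim S = ms.dim S" unfolding span_dim_def ..

lemma sum_apply_fun: "(\<Sum>i\<in>I. f i) x = (\<Sum>i\<in>I. f i x)"
  by (induction I rule: infinite_finite_induct) auto

lemma sum_restrict_nat:
  fixes f :: "nat \<Rightarrow> 'b::comm_monoid_add"
  assumes "r \<le> m" "\<And>i. r \<le> i \<Longrightarrow> i < m \<Longrightarrow> f i = 0"
  shows "(\<Sum>i<m. f i) = (\<Sum>i<r. f i)"
  by (rule sum.mono_neutral_right) (use assms in auto)

definition tr1 :: "nat \<Rightarrow> 'a::field smat \<Rightarrow> 'a mat \<Rightarrow> 'a smat" where
  "tr1 m A R = (\<lambda>i' j k. \<Sum>i<m. R $$ (i,i') * A i j k)"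
definition tr2 :: "nat \<Rightarrow> 'a::field smat \<Rightarrow> 'a mat \<Rightarrow> 'a smat" where
  "tr2 n A S = (\<lambda>i j' k. \<Sum>j<n. S $$ (j,j') * A i j k)"
definition tr3 :: "nat \<Rightarrow> 'a::field smat \<Rightarrow> 'a mat \<Rightarrow> 'a smat" where
  "tr3 q A T = (\<lambda>i j k'. \<Sum>k<q. T $$ (k,k') * A i j k)"
definition eqb :: "nat \<Rightarrow> nat \<Rightarrow> nat \<Rightarrow> 'a smat \<Rightarrow> 'a smat \<Rightarrow> bool" where
  "eqb m n q A B \<longleftrightarrow> (\<forall>i<m. \<forall>j<n. \<forall>k<q. A i j k = B i j k)"
definition rot :: "'a smat \<Rightarrow> 'a smat" where
  "rot A = (\<lambda>j k i. A i j k)"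
definition TT where "TT m n q A R S T = tr1 m (tr2 n (tr3 q A T) S) R"

lemma eqb_refl: "eqb m n q A A" by (simp add: eqb_def)
lemma eqb_sym: "eqb m n q A B \<Longrightarrow> eqb m n q B A" by (simp add: eqb_def)
lemma eqb_trans: "eqb m n q A B \<Longrightarrow> eqb m n q B C \<Longrightarrow> eqb m n q A C" by (simp add: eqb_def)

lemma TT_sum: "TT m n q A R S T i' j' k' =
   (\<Sum>i<m. \<Sum>j<n. \<Sum>k<q. A i j k * R $$ (i, i') * S $$ (j, j') * T $$ (k, k'))"
  by (simp add: TT_def tr1_def tr2_def tr3_def sum_distrib_left mult_ac)

lemma sequiv_alt: "sequiv m n q A B \<longleftrightarrow>
     (\<exists>R S T. R \<in> carrier_mat m m \<and> invertible_mat R \<and>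
              S \<in> carrier_mat n n \<and> invertible_mat S \<and>
              T \<in> carrier_mat q q \<and> invertible_mat T \<and> eqb m n q B (TT m n q A R S T))"
  unfolding sequiv_def eqb_def TT_sum ..

lemma tr1_cong: "eqb m n q A B \<Longrightarrow> eqb m' n q (tr1 m A R) (tr1 m B R)"
  by (simp add: eqb_def tr1_def)
lemma tr2_cong: "eqb m n q A B \<Longrightarrow> eqb m n' q (tr2 n A R) (tr2 n B R)"
  by (simp add: eqb_def tr2_def)
lemma tr3_cong: "eqb m n q A B \<Longrightarrow> eqb m n q' (tr3 q A R) (tr3 q B R)"
  by (simp add: eqb_def tr3_def)

lemma tr12: "tr1 m (tr2 n A S) R = tr2 n (tr1 m A R) S"
  unfolding tr1_def tr2_def by (auto simp: fun_eq_iff sum_distrib_left mult_ac intro: sum.swap)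
lemma tr13: "tr1 m (tr3 n A S) R = tr3 n (tr1 m A R) S"
  unfolding tr1_def tr3_def by (auto simp: fun_eq_iff sum_distrib_left mult_ac intro: sum.swap)
lemma tr23: "tr2 m (tr3 n A S) R = tr3 n (tr2 m A R) S"
  unfolding tr2_def tr3_def by (auto simp: fun_eq_iff sum_distrib_left mult_ac intro: sum.swap)

lemma tr1_comp: "R1 \<in> carrier_mat m m \<Longrightarrow> R2 \<in> carrier_mat m m \<Longrightarrow>
   eqb m n q (tr1 m (tr1 m A R1) R2) (tr1 m A (R1 * R2))"
  unfolding eqb_def tr1_def
  by (auto simp: scalar_prod_def sum_distrib_left sum_distrib_right mult_ac atLeast0LessThan intro: sum.swap)
lemma tr2_comp: "R1 \<in> carrier_mat n n \<Longrightarrow> R2 \<in> carrier_mat n n \<Longrightarrow>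
   eqb m n q (tr2 n (tr2 n A R1) R2) (tr2 n A (R1 * R2))"
  unfolding eqb_def tr2_def
  by (auto simp: scalar_prod_def sum_distrib_left sum_distrib_right mult_ac atLeast0LessThan intro: sum.swap)
lemma tr3_comp: "R1 \<in> carrier_mat q q \<Longrightarrow> R2 \<in> carrier_mat q q \<Longrightarrow>
   eqb m n q (tr3 q (tr3 q A R1) R2) (tr3 q A (R1 * R2))"
  unfolding eqb_def tr3_def
  by (auto simp: scalar_prod_def sum_distrib_left sum_distrib_right mult_ac atLeast0LessThan intro: sum.swap)

lemma ifmult: "(if P then 1 else 0) * (x::'a::field) = (if P then x else 0)" by simp
lemma tr1_one: "eqb m n q (tr1 m A (1\<^sub>m m)) A"
  unfolding eqb_def tr1_def by (auto simp: ifmult)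
lemma tr2_one: "eqb m n q (tr2 n A (1\<^sub>m n)) A"
  unfolding eqb_def tr2_def by (auto simp: ifmult)
lemma tr3_one: "eqb m n q (tr3 q A (1\<^sub>m q)) A"
  unfolding eqb_def tr3_def by (auto simp: ifmult)

lemma TT_cong: "eqb m n q A B \<Longrightarrow> eqb m n q (TT m n q A R S T) (TT m n q B R S T)"
  unfolding TT_def by (intro tr1_cong tr2_cong tr3_cong)

lemma TT_comp:
  assumes "R1 \<in> carrier_mat m m" "R2 \<in> carrier_mat m m" "S1 \<in> carrier_mat n n" "S2 \<in> carrier_mat n n"
    "T1 \<in> carrier_mat q q" "T2 \<in> carrier_mat q q"
  shows "eqb m n q (TT m n q (TT m n q A R1 S1 T1) R2 S2 T2) (TT m n q A (R1*R2) (S1*S2) (T1*T2))"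
proof -
  have e: "TT m n q (TT m n q A R1 S1 T1) R2 S2 T2 =
     tr1 m (tr1 m (tr2 n (tr2 n (tr3 q (tr3 q A T1) T2) S1) S2) R1) R2"
    by (simp only: TT_def tr12[symmetric] tr13[symmetric] tr23[symmetric])
  show ?thesis unfolding e unfolding TT_def
    apply (rule eqb_trans[OF tr1_comp[OF assms(1,2)]])
    apply (rule tr1_cong)
    apply (rule eqb_trans[OF tr2_comp[OF assms(3,4)]])
    apply (rule tr2_cong)
    apply (rule tr3_comp[OF assms(5,6)])
    done
qed

lemma TT_one: "eqb m n q (TT m n q A (1\<^sub>m m) (1\<^sub>m n) (1\<^sub>m q)) A"
  unfolding TT_def
  apply (rule eqb_trans[OF tr1_one])
  apply (rule eqb_trans[OF tr2_one])
  apply (rule tr3_one)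
  done

lemma inv_char: assumes "R \<in> carrier_mat m m"
  shows "invertible_mat R \<longleftrightarrow> (\<exists>Ri \<in> carrier_mat m m. R * Ri = 1\<^sub>m m \<and> Ri * R = 1\<^sub>m m)"
proof
  assume "invertible_mat R"
  then obtain B where B: "R * B = 1\<^sub>m m" "B * R = 1\<^sub>m (dim_row B)"
    using assms unfolding invertible_mat_def inverts_mat_def by auto
  have "dim_col B = m" using arg_cong[OF B(1), of dim_col] by simp
  moreover have "dim_row B = m" using arg_cong[OF B(2), of dim_col] assms by simp
  ultimately show "\<exists>Ri \<in> carrier_mat m m. R * Ri = 1\<^sub>m m \<and> Ri * R = 1\<^sub>m m"
    using B by (auto intro!: bexI[of _ B])
next
  assume "\<exists>Ri \<in> carrier_mat m m. R * Ri = 1\<^sub>m m \<and> Ri * R = 1\<^sub>m m"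
  then show "invertible_mat R" using assms
    unfolding invertible_mat_def inverts_mat_def square_mat.simps by auto
qed

lemma inv_mult:
  assumes "R1 \<in> carrier_mat m m" "R2 \<in> carrier_mat m m" "invertible_mat R1" "invertible_mat R2"
  shows "invertible_mat (R1 * R2)"
proof -
  obtain X1 where X1: "X1 \<in> carrier_mat m m" "R1 * X1 = 1\<^sub>m m" "X1 * R1 = 1\<^sub>m m"
    using assms inv_char by blast
  obtain X2 where X2: "X2 \<in> carrier_mat m m" "R2 * X2 = 1\<^sub>m m" "X2 * R2 = 1\<^sub>m m"
    using assms inv_char by blast
  have "R1 * R2 * (X2 * X1) = R1 * (R2 * (X2 * X1))"
    using assms X1 X2 by (intro assoc_mult_mat) auto
  also have "R2 * (X2 * X1) = R2 * X2 * X1"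
    using assms X1 X2 by (intro assoc_mult_mat[symmetric]) auto
  finally have a: "R1 * R2 * (X2 * X1) = 1\<^sub>m m" using X1 X2 by simp
  have "X2 * X1 * (R1 * R2) = X2 * (X1 * (R1 * R2))"
    using assms X1 X2 by (intro assoc_mult_mat) auto
  also have "X1 * (R1 * R2) = X1 * R1 * R2"
    using assms X1 X2 by (intro assoc_mult_mat[symmetric]) auto
  finally have b: "X2 * X1 * (R1 * R2) = 1\<^sub>m m" using X2 X1 assms by simp
  have c: "R1*R2 \<in> carrier_mat m m" using assms by auto
  show ?thesis unfolding inv_char[OF c]
  proof (rule bexI[of _ "X2*X1"])
    show "R1 * R2 * (X2 * X1) = 1\<^sub>m m \<and> X2 * X1 * (R1 * R2) = 1\<^sub>m m" using a b by blast
    show "X2 * X1 \<in> carrier_mat m m" using X1 X2 by auto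
  qed
qed

lemma inv_obtain:
  assumes "R \<in> carrier_mat m m" "invertible_mat R"
  obtains Ri where "Ri \<in> carrier_mat m m" "invertible_mat Ri" "R * Ri = 1\<^sub>m m" "Ri * R = 1\<^sub>m m"
proof -
  obtain X where X: "X \<in> carrier_mat m m" "R * X = 1\<^sub>m m" "X * R = 1\<^sub>m m"
    using assms inv_char by blast
  have "invertible_mat X" using X assms by (subst inv_char[of _ m]) auto
  then show ?thesis using that X by blast
qed

lemma sequiv_trans: "sequiv m n q A B \<Longrightarrow> sequiv m n q B C \<Longrightarrow> sequiv m n q A C"
proof -
  assume "sequiv m n q A B" "sequiv m n q B C"
  then obtain R1 S1 T1 R2 S2 T2 where
    h: "R1 \<in> carrier_mat m m" "invertible_mat R1" "S1 \<in> carrier_mat n n" "invertible_mat S1"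
    "T1 \<in> carrier_mat q q" "invertible_mat T1" "eqb m n q B (TT m n q A R1 S1 T1)"
    "R2 \<in> carrier_mat m m" "invertible_mat R2" "S2 \<in> carrier_mat n n" "invertible_mat S2"
    "T2 \<in> carrier_mat q q" "invertible_mat T2" "eqb m n q C (TT m n q B R2 S2 T2)"
    unfolding sequiv_alt by blast
  have "eqb m n q C (TT m n q A (R1*R2) (S1*S2) (T1*T2))"
    using h(14) TT_cong[OF h(7)] TT_comp[OF h(1,8,3,10,5,12)] eqb_trans by blast
  note ee = this
  show ?thesis unfolding sequiv_alt
    apply (rule exI[of _ "R1*R2"], rule exI[of _ "S1*S2"], rule exI[of _ "T1*T2"]) using h ee by (auto intro: inv_mult)
qed

lemma sequiv_sym: "sequiv m n q A B \<Longrightarrow> sequiv m n q B A"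
proof -
  assume "sequiv m n q A B"
  then obtain R S T where
    h: "R \<in> carrier_mat m m" "invertible_mat R" "S \<in> carrier_mat n n" "invertible_mat S"
    "T \<in> carrier_mat q q" "invertible_mat T" "eqb m n q B (TT m n q A R S T)"
    unfolding sequiv_alt by blast
  obtain Ri where Ri: "Ri \<in> carrier_mat m m" "invertible_mat Ri" "R * Ri = 1\<^sub>m m"
    using inv_obtain[OF h(1,2)] by metis
  obtain Si where Si: "Si \<in> carrier_mat n n" "invertible_mat Si" "S * Si = 1\<^sub>m n"
    using inv_obtain[OF h(3,4)] by metis
  obtain Ti where Ti: "Ti \<in> carrier_mat q q" "invertible_mat Ti" "T * Ti = 1\<^sub>m q"
    using inv_obtain[OF h(5,6)] by metis
  have "eqb m n q (TT m n q B Ri Si Ti) A"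
    using TT_cong[OF h(7)] TT_comp[OF h(1) Ri(1) h(3) Si(1) h(5) Ti(1), of A] TT_one[of m n q A]
      Ri(3) Si(3) Ti(3) eqb_trans by metis
  note ee = this
  show ?thesis unfolding sequiv_alt
    apply (rule exI[of _ Ri], rule exI[of _ Si], rule exI[of _ Ti]) using Ri Si Ti ee by (auto intro: eqb_sym)
qed

lemma inv_one: "invertible_mat (1\<^sub>m m :: 'a::field mat)"
  unfolding invertible_mat_def inverts_mat_def by (auto intro: exI[of _ "1\<^sub>m m"])

lemma sequiv_refl: "sequiv m n q A A"
  unfolding sequiv_alt
  apply (rule exI[of _ "1\<^sub>m m"], rule exI[of _ "1\<^sub>m n"], rule exI[of _ "1\<^sub>m q"])
  by (auto simp: inv_one intro: eqb_sym TT_one)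



lemma dim_mono_span:
  assumes "finite W" "V \<subseteq> ms.span W"
  shows "ms.dim V \<le> ms.dim W"
proof -
  obtain B where B: "B \<subseteq> W" "ms.independent B" "W \<subseteq> ms.span B" "card B = ms.dim W"
    using ms.basis_exists[of W] by blast
  have "V \<subseteq> ms.span B" using assms(2) B(3) ms.span_mono ms.span_span by blast
  then have "ms.dim V \<le> card B" using ms.dim_le_card[of V B] B(1) assms(1) finite_subset by blast
  then show ?thesis using B(4) by simp
qed

lemma mh:
  fixes g :: "(nat \<Rightarrow> nat \<Rightarrow> 'a::field) \<Rightarrow> (nat \<Rightarrow> nat \<Rightarrow> 'a)"
  assumes "\<And>x y. g (x+y) = g x + g y" "\<And>c x. g (mscale c x) = mscale c (g x)"
  shows "module_hom (mscale::'a \<Rightarrow> _) mscale g"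
  by (rule module_hom.intro[OF ms.module_axioms ms.module_axioms]) (rule module_hom_axioms.intro; fact)

lemma dim_image_le':
  fixes g :: "(nat \<Rightarrow> nat \<Rightarrow> 'a::field) \<Rightarrow> (nat \<Rightarrow> nat \<Rightarrow> 'a)"
  assumes "\<And>x y. g (x+y) = g x + g y" "\<And>c x. g (mscale c x) = mscale c (g x)" "finite X"
  shows "ms.dim (g ` X) \<le> ms.dim X"
proof -
  interpret gh: module_hom "mscale::'a \<Rightarrow> _" mscale g using mh assms by blast
  obtain B where B: "B \<subseteq> X" "ms.independent B" "X \<subseteq> ms.span B" "card B = ms.dim X"
    using ms.basis_exists[of X] by blast
  have fB: "finite B" using B(1) assms(3) finite_subset by blast
  have "g ` X \<subseteq> ms.span (g ` B)" using gh.span_image[of B] B(3) by blast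
  then have "ms.dim (g ` X) \<le> card (g ` B)" using ms.dim_le_card fB by blast
  also have "\<dots> \<le> card B" using card_image_le fB by blast
  finally show ?thesis using B(4) by simp
qed

definition tp :: "(nat \<Rightarrow> nat \<Rightarrow> 'a) \<Rightarrow> (nat \<Rightarrow> nat \<Rightarrow> 'a)" where "tp M = (\<lambda>a b. M b a)"

lemma dim_tp: "finite X \<Longrightarrow> ms.dim (tp ` X) = ms.dim (X :: (nat \<Rightarrow> nat \<Rightarrow> 'a::field) set)"
proof -
  assume f: "finite X"
  have l1: "\<And>x y. tp (x+y) = tp x + tp (y::nat \<Rightarrow> nat \<Rightarrow> 'a)" "\<And>c x. tp (mscale c x) = mscale c (tp (x::nat \<Rightarrow> nat \<Rightarrow> 'a))"
    by (auto simp: tp_def mscale_def fun_eq_iff)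
  have "tp ` tp ` X = X" by (auto simp: tp_def image_image)
  then show ?thesis using dim_image_le'[OF l1 f] dim_image_le'[OF l1 finite_imageI[OF f]]
    by (metis le_antisym)
qed

lemma slices1_eqb: "eqb m n q A B \<Longrightarrow> slices1 m n q A = slices1 m n q B"
  unfolding slices1_def eqb_def by (auto intro!: image_cong simp: fun_eq_iff)

lemma finite_slices1: "finite (slices1 m n q A)" unfolding slices1_def by auto

lemma slice_tr1: "(\<lambda>j k. if j < n \<and> k < q then tr1 m D R i' j k else 0) =
   (\<Sum>i<m. mscale (R $$ (i,i')) (\<lambda>j k. if j < n \<and> k < q then D i j k else 0))"
  by (auto simp: fun_eq_iff sum_apply_fun mscale_def tr1_def)

lemma dim_tr1: "ms.dim (slices1 m n q (tr1 m D R)) \<le> ms.dim (slices1 m n q D)"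
proof (rule dim_mono_span[OF finite_slices1])
  show "slices1 m n q (tr1 m D R) \<subseteq> ms.span (slices1 m n q D)"
  proof
    fix x assume "x \<in> slices1 m n q (tr1 m D R)"
    then obtain i' where x: "x = (\<lambda>j k. if j < n \<and> k < q then tr1 m D R i' j k else 0)"
      unfolding slices1_def by auto
    show "x \<in> ms.span (slices1 m n q D)" unfolding x slice_tr1
      by (intro ms.span_sum ms.span_scale ms.span_base) (auto simp: slices1_def)
  qed
qed

lemma dim_tr2: "ms.dim (slices1 m n q (tr2 n D S)) \<le> ms.dim (slices1 m n q D)"
proof -
  define g where "g M = (\<lambda>j' k. if j' < n \<and> k < q then \<Sum>j<n. S $$ (j,j') * M j k else 0)" for M :: "nat \<Rightarrow> nat \<Rightarrow> 'a"
  have l: "\<And>x y. g (x+y) = g x + g y" "\<And>c x. g (mscale c x) = mscale c (g x)"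
    by (auto simp: g_def mscale_def fun_eq_iff sum.distrib sum_distrib_left algebra_simps)
  have "slices1 m n q (tr2 n D S) = g ` slices1 m n q D"
    unfolding slices1_def image_image
    by (intro image_cong refl) (auto simp: g_def tr2_def fun_eq_iff intro!: sum.cong)
  then show ?thesis using dim_image_le'[OF l finite_slices1] by simp
qed

lemma dim_tr3: "ms.dim (slices1 m n q (tr3 q D T)) \<le> ms.dim (slices1 m n q D)"
proof -
  define g where "g M = (\<lambda>j k'. if j < n \<and> k' < q then \<Sum>k<q. T $$ (k,k') * M j k else 0)" for M :: "nat \<Rightarrow> nat \<Rightarrow> 'a"
  have l: "\<And>x y. g (x+y) = g x + g y" "\<And>c x. g (mscale c x) = mscale c (g x)"
    by (auto simp: g_def mscale_def fun_eq_iff sum.distrib sum_distrib_left algebra_simps)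
  have "slices1 m n q (tr3 q D T) = g ` slices1 m n q D"
    unfolding slices1_def image_image
    by (intro image_cong refl) (auto simp: g_def tr3_def fun_eq_iff intro!: sum.cong)
  then show ?thesis using dim_image_le'[OF l finite_slices1] by simp
qed

lemma rot_tr1: "rot (tr1 m A R) = tr3 m (rot A) R" by (simp add: rot_def tr1_def tr3_def fun_eq_iff)
lemma rot_tr2: "rot (tr2 m A R) = tr1 m (rot A) R" by (simp add: rot_def tr1_def tr2_def fun_eq_iff)
lemma rot_tr3: "rot (tr3 m A R) = tr2 m (rot A) R" by (simp add: rot_def tr2_def tr3_def fun_eq_iff)
lemma eqb_rot: "eqb m n q A B \<Longrightarrow> eqb n q m (rot A) (rot B)" by (simp add: eqb_def rot_def)

lemma slices2_rot: "slices2 m n q A = tp ` slices1 n q m (rot A)"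
  unfolding slices1_def slices2_def image_image tp_def rot_def by (auto intro!: image_cong simp: fun_eq_iff)
lemma slices3_rot: "slices3 m n q A = slices1 q m n (rot (rot A))"
  unfolding slices1_def slices3_def rot_def by auto

lemma srank_le:
  assumes "sequiv m n q A B"
  shows "span_dim (slices1 m n q B) \<le> span_dim (slices1 m n q A)"
    "span_dim (slices2 m n q B) \<le> span_dim (slices2 m n q A)"
    "span_dim (slices3 m n q B) \<le> span_dim (slices3 m n q A)"
proof -
  obtain R S T where e: "eqb m n q B (TT m n q A R S T)" using assms unfolding sequiv_alt by blast
  show "span_dim (slices1 m n q B) \<le> span_dim (slices1 m n q A)"
    unfolding span_dim_ms slices1_eqb[OF e] TT_def
    by (rule order_trans[OF dim_tr1 order_trans[OF dim_tr2 dim_tr3]])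
  have e2: "eqb n q m (rot B) (tr3 m (tr1 n (tr2 q (rot A) T) S) R)"
    using eqb_rot[OF e] unfolding TT_def rot_tr1 rot_tr2 rot_tr3 .
  show "span_dim (slices2 m n q B) \<le> span_dim (slices2 m n q A)"
    unfolding span_dim_ms slices2_rot dim_tp[OF finite_slices1] slices1_eqb[OF e2]
    by (rule order_trans[OF dim_tr3 order_trans[OF dim_tr1 dim_tr2]])
  have e3: "eqb q m n (rot (rot B)) (tr2 m (tr3 n (tr1 q (rot (rot A)) T) S) R)"
    using eqb_rot[OF e2] unfolding rot_tr1 rot_tr2 rot_tr3 .
  show "span_dim (slices3 m n q B) \<le> span_dim (slices3 m n q A)"
    unfolding span_dim_ms slices3_rot slices1_eqb[OF e3]
    by (rule order_trans[OF dim_tr2 order_trans[OF dim_tr3 dim_tr1]])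
qed

lemma srank_eq: "sequiv m n q A B \<Longrightarrow> srank m n q A = srank m n q B"
  using srank_le[of m n q A B] srank_le[OF sequiv_sym, of m n q A B]
  unfolding srank_def by (simp add: le_antisym)



lemma block1:
  fixes C B :: "'a::field smat"
  assumes rm: "r \<le> m"
    and Cz: "\<And>i j k. r \<le> i \<Longrightarrow> i < m \<Longrightarrow> j < n \<Longrightarrow> k < q \<Longrightarrow> C i j k = 0"
    and dC: "span_dim (slices1 m n q C) = r"
    and e: "eqb m n q B (tr1 m C R)"
    and Bz: "\<And>i j k. r \<le> i \<Longrightarrow> i < m \<Longrightarrow> j < n \<Longrightarrow> k < q \<Longrightarrow> B i j k = 0"
    and i: "i < r" and i': "r \<le> i'" "i' < m"
  shows "R $$ (i,i') = 0"
proof -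
  define v where "v i = (\<lambda>j k. if j < n \<and> k < q then C i j k else 0)" for i
  define V where "V = v ` {..<r}"
  have fV: "finite V" unfolding V_def by auto
  have v0: "v i = 0" if "r \<le> i" "i < m" for i
    using Cz that by (auto simp: v_def fun_eq_iff)
  have "slices1 m n q C \<subseteq> ms.span V"
  proof
    fix x assume "x \<in> slices1 m n q C"
    then obtain i where "i < m" "x = v i" unfolding slices1_def v_def by auto
    then show "x \<in> ms.span V"
      by (cases "i < r") (auto simp: V_def v0 intro: ms.span_base ms.span_zero)
  qed
  then have a: "r \<le> ms.dim V" using dim_mono_span[OF fV, of "slices1 m n q C"] dC by (simp add: span_dim_ms)
  have b: "ms.dim V \<le> card V" using ms.dim_le_card[OF ms.span_superset fV] .
  have c: "card V \<le> r" unfolding V_def using card_image_le[of "{..<r}" v] by simp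
  from a b c have cV: "card V = r" "ms.dim V = card V" by auto
  have inj: "inj_on v {..<r}" using cV(1) unfolding V_def by (intro eq_card_imp_inj_on) auto
  obtain Bs where Bs: "Bs \<subseteq> V" "ms.independent Bs" "V \<subseteq> ms.span Bs" "card Bs = ms.dim V"
    using ms.basis_exists[of V] by blast
  have "Bs = V" using card_subset_eq[OF fV Bs(1)] Bs(4) cV by simp
  with Bs have indV: "ms.independent V" by simp
  define c where "c w = R $$ (the_inv_into {..<r} v w, i')" for w
  have "0 = (\<lambda>j k. if j < n \<and> k < q then B i' j k else 0)"
    using Bz i' by (auto simp: fun_eq_iff)
  also have "(\<lambda>j k. if j < n \<and> k < q then B i' j k else 0) =
      (\<lambda>j k. if j < n \<and> k < q then tr1 m C R i' j k else 0)"
    using e i' by (auto simp: eqb_def fun_eq_iff)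
  also have "\<dots> = (\<Sum>i<m. mscale (R $$ (i,i')) (v i))" unfolding slice_tr1 v_def ..
  also have "\<dots> = (\<Sum>i<r. mscale (R $$ (i,i')) (v i))"
    by (rule sum_restrict_nat[OF rm]) (simp add: v0 mscale_def fun_eq_iff)
  also have "\<dots> = (\<Sum>w\<in>V. mscale (c w) w)"
    unfolding V_def by (subst sum.reindex[OF inj]) (auto simp: c_def the_inv_into_f_f[OF inj])
  finally have "(\<Sum>w\<in>V. mscale (c w) w) = 0" by (rule sym)
  then have "c (v i) = 0" using indV fV i unfolding ms.independent_explicit_finite_subsets
    by (auto simp: V_def)
  then show ?thesis by (simp add: c_def the_inv_into_f_f[OF inj] i)
qed

lemma blockG:
  fixes A' B' :: "'a::field smat"
  assumes rm: "r1 \<le> m"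
    and S: "S \<in> carrier_mat n n" "invertible_mat S"
    and T: "T \<in> carrier_mat q q" "invertible_mat T"
    and sr: "span_dim (slices1 m n q (sdsum_zero r1 r2 r3 A')) = r1"
    and e: "eqb m n q (sdsum_zero r1 r2 r3 B') (TT m n q (sdsum_zero r1 r2 r3 A') R S T)"
    and i: "i < r1" and i': "r1 \<le> i'" "i' < m"
  shows "R $$ (i,i') = 0"
proof -
  define C where "C = tr2 n (tr3 q (sdsum_zero r1 r2 r3 A') T) S"
  have "sequiv m n q (sdsum_zero r1 r2 r3 A') C"
    unfolding sequiv_alt
    apply (rule exI[of _ "1\<^sub>m m"], rule exI[of _ S], rule exI[of _ T])
    using S T by (auto simp: inv_one TT_def C_def intro: eqb_sym tr1_one)
  then have "srank m n q C = srank m n q (sdsum_zero r1 r2 r3 A')" using srank_eq by metis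
  then have dC: "span_dim (slices1 m n q C) = r1" using sr by (simp add: srank_def)
  show ?thesis
  proof (rule block1[OF rm _ dC _ _ i i'])
    show "eqb m n q (sdsum_zero r1 r2 r3 B') (tr1 m C R)" using e by (simp add: TT_def C_def)
    show "\<And>i j k. r1 \<le> i \<Longrightarrow> i < m \<Longrightarrow> j < n \<Longrightarrow> k < q \<Longrightarrow> C i j k = 0"
      by (simp add: C_def tr2_def tr3_def sdsum_zero_def)
    show "\<And>i j k. r1 \<le> i \<Longrightarrow> i < m \<Longrightarrow> j < n \<Longrightarrow> k < q \<Longrightarrow> sdsum_zero r1 r2 r3 B' i j k = 0"
      by (simp add: sdsum_zero_def)
  qed
qed

lemma rot_sdsum: "rot (sdsum_zero r1 r2 r3 A) = sdsum_zero r2 r3 r1 (rot A)"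
  by (auto simp: rot_def sdsum_zero_def fun_eq_iff)

lemma rot3: "rot (rot (rot A)) = A" by (simp add: rot_def)

lemma srank_rot: "srank m n q X = (a,b,c) \<Longrightarrow> srank n q m (rot X) = (b,c,a)"
proof -
  assume h: "srank m n q X = (a,b,c)"
  have 1: "span_dim (slices1 n q m (rot X)) = span_dim (slices2 m n q X)"
    unfolding slices2_rot span_dim_ms dim_tp[OF finite_slices1] ..
  have 2: "span_dim (slices2 n q m (rot X)) = span_dim (slices3 m n q X)"
    unfolding slices2_rot slices3_rot span_dim_ms dim_tp[OF finite_slices1] ..
  have 3: "span_dim (slices3 n q m (rot X)) = span_dim (slices1 m n q X)"
    unfolding slices3_rot rot3 ..
  show ?thesis using h 1 2 3 unfolding srank_def by simp
qed

lemma rot_TT: "rot (TT m n q A R S T) = TT n q m (rot A) S T R"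
  by (simp only: TT_def rot_tr1 rot_tr2 rot_tr3 tr12 tr13 tr23)

lemma eqb_rot_TT: "eqb m n q B (TT m n q A R S T) \<Longrightarrow> eqb n q m (rot B) (TT n q m (rot A) S T R)"
  using eqb_rot rot_TT by metis



lemma blocks3:
  fixes A' B' :: "'a::field smat"
  assumes rm: "r1 \<le> m" "r2 \<le> n" "r3 \<le> q"
    and R: "R \<in> carrier_mat m m" "invertible_mat R"
    and S: "S \<in> carrier_mat n n" "invertible_mat S"
    and T: "T \<in> carrier_mat q q" "invertible_mat T"
    and sr: "srank m n q (sdsum_zero r1 r2 r3 A') = (r1, r2, r3)"
    and e: "eqb m n q (sdsum_zero r1 r2 r3 B') (TT m n q (sdsum_zero r1 r2 r3 A') R S T)"
  shows "\<forall>i<r1. \<forall>i'. r1 \<le> i' \<longrightarrow> i' < m \<longrightarrow> R $$ (i,i') = 0"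
    "\<forall>i<r2. \<forall>i'. r2 \<le> i' \<longrightarrow> i' < n \<longrightarrow> S $$ (i,i') = 0"
    "\<forall>i<r3. \<forall>i'. r3 \<le> i' \<longrightarrow> i' < q \<longrightarrow> T $$ (i,i') = 0"
proof -
  show "\<forall>i<r1. \<forall>i'. r1 \<le> i' \<longrightarrow> i' < m \<longrightarrow> R $$ (i,i') = 0"
    using blockG[OF rm(1) S T _ e] sr by (simp add: srank_def)
  have sr2: "srank n q m (sdsum_zero r2 r3 r1 (rot A')) = (r2, r3, r1)"
    using srank_rot[OF sr] rot_sdsum by metis
  have e2: "eqb n q m (sdsum_zero r2 r3 r1 (rot B')) (TT n q m (sdsum_zero r2 r3 r1 (rot A')) S T R)"
    using eqb_rot_TT[OF e] rot_sdsum by metis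
  show "\<forall>i<r2. \<forall>i'. r2 \<le> i' \<longrightarrow> i' < n \<longrightarrow> S $$ (i,i') = 0"
    using blockG[OF rm(2) T R _ e2] sr2 by (simp add: srank_def)
  have sr3: "srank q m n (sdsum_zero r3 r1 r2 (rot (rot A'))) = (r3, r1, r2)"
    using srank_rot[OF sr2] rot_sdsum by metis
  have e3: "eqb q m n (sdsum_zero r3 r1 r2 (rot (rot B'))) (TT q m n (sdsum_zero r3 r1 r2 (rot (rot A'))) T R S)"
    using eqb_rot_TT[OF e2] rot_sdsum by metis
  show "\<forall>i<r3. \<forall>i'. r3 \<le> i' \<longrightarrow> i' < q \<longrightarrow> T $$ (i,i') = 0"
    using blockG[OF rm(3) R S _ e3] sr3 by (simp add: srank_def)
qed

definition sub :: "nat \<Rightarrow> 'a mat \<Rightarrow> 'a mat" where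
  "sub r R = mat r r (\<lambda>(i,j). R $$ (i,j))"

lemma sub_prod:
  fixes R Ri :: "'a::field mat"
  assumes "a < r" "b < r" "r \<le> m" "R \<in> carrier_mat m m" "Ri \<in> carrier_mat m m"
    and bR: "\<forall>i<r. \<forall>i'. r \<le> i' \<longrightarrow> i' < m \<longrightarrow> R $$ (i,i') = 0"
  shows "(sub r R * sub r Ri) $$ (a,b) = (R * Ri) $$ (a,b)"
proof -
  have "(sub r R * sub r Ri) $$ (a,b) = (\<Sum>c<r. R $$ (a,c) * Ri $$ (c,b))"
    using assms by (simp add: sub_def scalar_prod_def atLeast0LessThan)
  also have "\<dots> = (\<Sum>c<m. R $$ (a,c) * Ri $$ (c,b))"
    by (rule sum_restrict_nat[symmetric]) (use assms in auto)
  also have "\<dots> = (R * Ri) $$ (a,b)"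
    using assms by (simp add: scalar_prod_def atLeast0LessThan)
  finally show ?thesis .
qed

lemma sub_inv:
  fixes R Ri :: "'a::field mat"
  assumes "r \<le> m" "R \<in> carrier_mat m m" "Ri \<in> carrier_mat m m" "R * Ri = 1\<^sub>m m" "Ri * R = 1\<^sub>m m"
    and bR: "\<forall>i<r. \<forall>i'. r \<le> i' \<longrightarrow> i' < m \<longrightarrow> R $$ (i,i') = 0"
    and bRi: "\<forall>i<r. \<forall>i'. r \<le> i' \<longrightarrow> i' < m \<longrightarrow> Ri $$ (i,i') = 0"
  shows "sub r R \<in> carrier_mat r r" "invertible_mat (sub r R)"
proof -
  show c: "sub r R \<in> carrier_mat r r" by (simp add: sub_def)
  have c2: "sub r Ri \<in> carrier_mat r r" by (simp add: sub_def)
  have 1: "sub r R * sub r Ri = 1\<^sub>m r"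
  proof (rule eq_matI)
    fix i j assume ij: "i < dim_row (1\<^sub>m r)" "j < dim_col (1\<^sub>m r :: 'a mat)"
    have "(sub r R * sub r Ri) $$ (i,j) = (R * Ri) $$ (i,j)"
      by (rule sub_prod) (use assms ij in auto)
    then show "(sub r R * sub r Ri) $$ (i,j) = 1\<^sub>m r $$ (i,j)" using assms(1,4) ij by simp
  qed (auto simp: sub_def)
  have 2: "sub r Ri * sub r R = 1\<^sub>m r"
  proof (rule eq_matI)
    fix i j assume ij: "i < dim_row (1\<^sub>m r)" "j < dim_col (1\<^sub>m r :: 'a mat)"
    have "(sub r Ri * sub r R) $$ (i,j) = (Ri * R) $$ (i,j)"
      by (rule sub_prod) (use assms ij in auto)
    then show "(sub r Ri * sub r R) $$ (i,j) = 1\<^sub>m r $$ (i,j)" using assms(1,5) ij by simp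
  qed (auto simp: sub_def)
  show "invertible_mat (sub r R)" unfolding inv_char[OF c] using 1 2 c2 by blast
qed



lemma sum_if_restrict:
  fixes g :: "nat \<Rightarrow> 'b::comm_monoid_add"
  shows "r \<le> m \<Longrightarrow> (\<Sum>i<m. if i < r then g i else 0) = (\<Sum>i<r. g i)"
  by (subst sum_restrict_nat[of r m]) auto

lemma sum3_if:
  fixes f :: "nat \<Rightarrow> nat \<Rightarrow> nat \<Rightarrow> 'b::comm_monoid_add"
  assumes "r1 \<le> m" "r2 \<le> n" "r3 \<le> q"
  shows "(\<Sum>i<m. \<Sum>j<n. \<Sum>k<q. if i < r1 \<and> j < r2 \<and> k < r3 then f i j k else 0) =
         (\<Sum>i<r1. \<Sum>j<r2. \<Sum>k<r3. f i j k)"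
proof -
  have 1: "(\<Sum>k<q. if i < r1 \<and> j < r2 \<and> k < r3 then f i j k else 0) =
      (if i < r1 \<and> j < r2 then \<Sum>k<r3. f i j k else 0)" for i j
    by (cases "i < r1 \<and> j < r2") (auto simp: sum_if_restrict assms)
  have 2: "(\<Sum>j<n. if i < r1 \<and> j < r2 then \<Sum>k<r3. f i j k else 0) =
      (if i < r1 then \<Sum>j<r2. \<Sum>k<r3. f i j k else 0)" for i
    by (cases "i < r1") (auto simp: sum_if_restrict assms)
  show ?thesis by (simp only: 1 2 sum_if_restrict assms)
qed

definition ext :: "nat \<Rightarrow> nat \<Rightarrow> 'a::field mat \<Rightarrow> 'a mat" where
  "ext r m X = mat m m (\<lambda>(i,j). if i < r \<and> j < r then X $$ (i,j) else if i = j then 1 else 0)"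

lemma ext_carrier: "ext r m X \<in> carrier_mat m m" by (simp add: ext_def)

lemma ext_mult:
  assumes rm: "r \<le> m" and X: "X \<in> carrier_mat r r" and Y: "Y \<in> carrier_mat r r"
  shows "ext r m X * ext r m Y = ext r m (X * Y)"
proof (rule eq_matI)
  fix a b assume "a < dim_row (ext r m (X * Y))" "b < dim_col (ext r m (X * Y))"
  then have ab: "a < m" "b < m" by (auto simp: ext_def)
  define f where "f c = ext r m X $$ (a,c) * ext r m Y $$ (c,b)" for c
  have "(ext r m X * ext r m Y) $$ (a,b) = (\<Sum>c\<in>{0..<m}. f c)"
    using ab by (simp add: ext_def scalar_prod_def f_def)
  also have "\<dots> = (\<Sum>c\<in>{0..<r}. f c) + (\<Sum>c\<in>{r..<m}. f c)"
    using rm by (simp add: sum.atLeastLessThan_concat)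
  also have "(\<Sum>c\<in>{0..<r}. f c) = (if a < r \<and> b < r then \<Sum>c\<in>{0..<r}. X $$ (a,c) * Y $$ (c,b) else 0)"
    using ab rm by (auto simp: f_def ext_def intro!: sum.neutral)
  also have "(\<Sum>c\<in>{r..<m}. f c) = (\<Sum>c\<in>{r..<m}. if a = c then (if c = b then 1 else 0) else 0)"
    using ab rm by (intro sum.cong refl) (auto simp: f_def ext_def)
  also have "\<dots> = (if a \<in> {r..<m} then (if a = b then 1 else 0) else 0)"
    by (rule sum.delta') simp
  also have "(if a < r \<and> b < r then \<Sum>c\<in>{0..<r}. X $$ (a,c) * Y $$ (c,b) else 0) +
      (if a \<in> {r..<m} then (if a = b then 1 else 0) else 0) = ext r m (X * Y) $$ (a,b)"
    using ab X Y by (auto simp: ext_def scalar_prod_def)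
  finally show "(ext r m X * ext r m Y) $$ (a,b) = ext r m (X * Y) $$ (a,b)" .
qed (auto simp: ext_def)

lemma ext_one: "ext r m (1\<^sub>m r) = 1\<^sub>m m"
  by (rule eq_matI) (auto simp: ext_def)

lemma ext_inv:
  assumes rm: "r \<le> m" and X: "X \<in> carrier_mat r r" "invertible_mat X"
  shows "invertible_mat (ext r m X)"
proof -
  obtain Xi where Xi: "Xi \<in> carrier_mat r r" "X * Xi = 1\<^sub>m r" "Xi * X = 1\<^sub>m r"
    using inv_char X by blast
  show ?thesis unfolding inv_char[OF ext_carrier]
    using ext_mult[OF rm X(1) Xi(1)] ext_mult[OF rm Xi(1) X(1)] Xi ext_one ext_carrier by metis
qed



lemma TT_inv:
  assumes "R \<in> carrier_mat m m" "Ri \<in> carrier_mat m m" "R * Ri = 1\<^sub>m m"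
    "S \<in> carrier_mat n n" "Si \<in> carrier_mat n n" "S * Si = 1\<^sub>m n"
    "T \<in> carrier_mat q q" "Ti \<in> carrier_mat q q" "T * Ti = 1\<^sub>m q"
    "eqb m n q B (TT m n q A R S T)"
  shows "eqb m n q A (TT m n q B Ri Si Ti)"
proof -
  have 1: "eqb m n q (TT m n q B Ri Si Ti) (TT m n q (TT m n q A R S T) Ri Si Ti)"
    by (rule TT_cong[OF assms(10)])
  have 2: "eqb m n q (TT m n q (TT m n q A R S T) Ri Si Ti) (TT m n q A (1\<^sub>m m) (1\<^sub>m n) (1\<^sub>m q))"
    using TT_comp[OF assms(1,2,4,5,7,8), of A] assms(3,6,9) by simp
  show ?thesis by (rule eqb_sym, rule eqb_trans[OF 1 eqb_trans[OF 2 TT_one]])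
qed

lemma srank_dims: "srank m n q A = (a,b,c) \<Longrightarrow> a \<le> m \<and> b \<le> n \<and> c \<le> q"
proof -
  assume h: "srank m n q A = (a,b,c)"
  have f1: "finite (slices1 m n q A)" unfolding slices1_def by simp
  have "ms.dim (slices1 m n q A) \<le> card (slices1 m n q A)" by (rule ms.dim_le_card[OF ms.span_superset f1])
  also have "\<dots> \<le> m" unfolding slices1_def using card_image_le[of "{..<m}"] by simp
  finally have d1: "ms.dim (slices1 m n q A) \<le> m" .
  have f2: "finite (slices2 m n q A)" unfolding slices2_def by simp
  have "ms.dim (slices2 m n q A) \<le> card (slices2 m n q A)" by (rule ms.dim_le_card[OF ms.span_superset f2])
  also have "\<dots> \<le> n" unfolding slices2_def using card_image_le[of "{..<n}"] by simp
  finally have d2: "ms.dim (slices2 m n q A) \<le> n" .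
  have f3: "finite (slices3 m n q A)" unfolding slices3_def by simp
  have "ms.dim (slices3 m n q A) \<le> card (slices3 m n q A)" by (rule ms.dim_le_card[OF ms.span_superset f3])
  also have "\<dots> \<le> q" unfolding slices3_def using card_image_le[of "{..<q}"] by simp
  finally have d3: "ms.dim (slices3 m n q A) \<le> q" .
  note d1 d2 d3
  then show ?thesis using h d1 d2 d3 by (simp add: srank_def span_dim_ms)
qed

lemma sd_equiv:
  assumes d: "r1 \<le> m" "r2 \<le> n" "r3 \<le> q" and e: "sequiv r1 r2 r3 A' B'"
  shows "sequiv m n q (sdsum_zero r1 r2 r3 A') (sdsum_zero r1 r2 r3 B')"
proof -
  obtain R S T where RST: "R \<in> carrier_mat r1 r1" "invertible_mat R"
      "S \<in> carrier_mat r2 r2" "invertible_mat S" "T \<in> carrier_mat r3 r3" "invertible_mat T" and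
    B': "\<And>i' j' k'. i' < r1 \<Longrightarrow> j' < r2 \<Longrightarrow> k' < r3 \<Longrightarrow>
       B' i' j' k' = (\<Sum>i<r1. \<Sum>j<r2. \<Sum>k<r3. A' i j k * R $$ (i, i') * S $$ (j, j') * T $$ (k, k'))"
    using e unfolding sequiv_def by blast
  define eR where "eR = ext r1 m R"
  define eS where "eS = ext r2 n S"
  define eT where "eT = ext r3 q T"
  have key: "sdsum_zero r1 r2 r3 B' i' j' k' = (\<Sum>i<m. \<Sum>j<n. \<Sum>k<q.
     sdsum_zero r1 r2 r3 A' i j k * eR $$ (i, i') * eS $$ (j, j') * eT $$ (k, k'))"
    if i': "i' < m" "j' < n" "k' < q" for i' j' k'
  proof -
    have "(\<Sum>i<m. \<Sum>j<n. \<Sum>k<q.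
     sdsum_zero r1 r2 r3 A' i j k * eR $$ (i, i') * eS $$ (j, j') * eT $$ (k, k')) =
      (\<Sum>i<m. \<Sum>j<n. \<Sum>k<q. if i < r1 \<and> j < r2 \<and> k < r3 then
        A' i j k * eR $$ (i, i') * eS $$ (j, j') * eT $$ (k, k') else 0)"
      by (intro sum.cong refl) (simp add: sdsum_zero_def)
    also have "\<dots> = (\<Sum>i<r1. \<Sum>j<r2. \<Sum>k<r3. A' i j k * eR $$ (i, i') * eS $$ (j, j') * eT $$ (k, k'))"
      by (rule sum3_if[OF d])
    also have "\<dots> = (\<Sum>i<r1. \<Sum>j<r2. \<Sum>k<r3. A' i j k * (if i' < r1 then R $$ (i, i') else 0) *
        (if j' < r2 then S $$ (j, j') else 0) * (if k' < r3 then T $$ (k, k') else 0))"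
      using d i' by (intro sum.cong refl) (auto simp: eR_def eS_def eT_def ext_def)
    also have "\<dots> = sdsum_zero r1 r2 r3 B' i' j' k'"
      by (cases "i' < r1 \<and> j' < r2 \<and> k' < r3") (auto simp: B' sdsum_zero_def)
    finally show ?thesis by simp
  qed
  show ?thesis unfolding sequiv_def
    apply (rule exI[of _ eR], rule exI[of _ eS], rule exI[of _ eT])
    using key RST d by (auto simp: eR_def eS_def eT_def ext_carrier ext_inv)
qed

lemma restrict_equiv:
  fixes A' B' :: "'a::field smat"
  assumes d: "r1 \<le> m" "r2 \<le> n" "r3 \<le> q"
    and e: "eqb m n q (sdsum_zero r1 r2 r3 B') (TT m n q (sdsum_zero r1 r2 r3 A') R S T)"
    and i': "i' < r1" "j' < r2" "k' < r3"
  shows "B' i' j' k' = (\<Sum>i<r1. \<Sum>j<r2. \<Sum>k<r3.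
     A' i j k * sub r1 R $$ (i, i') * sub r2 S $$ (j, j') * sub r3 T $$ (k, k'))"
proof -
  have "B' i' j' k' = sdsum_zero r1 r2 r3 B' i' j' k'" using i' by (simp add: sdsum_zero_def)
  also have "\<dots> = TT m n q (sdsum_zero r1 r2 r3 A') R S T i' j' k'"
    using e d i' by (simp add: eqb_def)
  also have "\<dots> = (\<Sum>i<m. \<Sum>j<n. \<Sum>k<q. if i < r1 \<and> j < r2 \<and> k < r3 then
        A' i j k * R $$ (i, i') * S $$ (j, j') * T $$ (k, k') else 0)"
    unfolding TT_sum by (intro sum.cong refl) (simp add: sdsum_zero_def)
  also have "\<dots> = (\<Sum>i<r1. \<Sum>j<r2. \<Sum>k<r3. A' i j k * R $$ (i, i') * S $$ (j, j') * T $$ (k, k'))"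
    by (rule sum3_if[OF d])
  also have "\<dots> = (\<Sum>i<r1. \<Sum>j<r2. \<Sum>k<r3.
     A' i j k * sub r1 R $$ (i, i') * sub r2 S $$ (j, j') * sub r3 T $$ (k, k'))"
    using i' by (intro sum.cong refl) (auto simp: sub_def)
  finally show ?thesis .
qed

theorem lemma4p2:
  fixes A B A' B' :: "'a::field smat"
  assumes "regular_part m n q A r1 r2 r3 A'"
      and "regular_part m n q B s1 s2 s3 B'"
  shows "sequiv m n q A B \<longleftrightarrow> ((r1, r2, r3) = (s1, s2, s3) \<and> sequiv r1 r2 r3 A' B')"
proof -
  have hA: "srank m n q A = (r1,r2,r3)" "sequiv m n q A (sdsum_zero r1 r2 r3 A')"
    using assms(1) unfolding regular_part_def by auto
  have hB: "srank m n q B = (s1,s2,s3)" "sequiv m n q B (sdsum_zero s1 s2 s3 B')"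
    using assms(2) unfolding regular_part_def by auto
  have dA: "r1 \<le> m" "r2 \<le> n" "r3 \<le> q" using srank_dims[OF hA(1)] by auto
  have sA: "srank m n q (sdsum_zero r1 r2 r3 A') = (r1,r2,r3)" using srank_eq[OF hA(2)] hA(1) by simp
  have sB: "srank m n q (sdsum_zero s1 s2 s3 B') = (s1,s2,s3)" using srank_eq[OF hB(2)] hB(1) by simp
  show ?thesis
  proof
    assume AB: "sequiv m n q A B"
    have rs: "(r1,r2,r3) = (s1,s2,s3)" using srank_eq[OF AB] hA(1) hB(1) by simp
    then have eq: "s1 = r1" "s2 = r2" "s3 = r3" by auto
    have "sequiv m n q (sdsum_zero r1 r2 r3 A') (sdsum_zero r1 r2 r3 B')"
      using sequiv_trans[OF sequiv_trans[OF sequiv_sym[OF hA(2)] AB] hB(2)] eq by simp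
    then obtain R S T where
      RST: "R \<in> carrier_mat m m" "invertible_mat R" "S \<in> carrier_mat n n" "invertible_mat S"
      "T \<in> carrier_mat q q" "invertible_mat T"
      and e: "eqb m n q (sdsum_zero r1 r2 r3 B') (TT m n q (sdsum_zero r1 r2 r3 A') R S T)"
      unfolding sequiv_alt by blast
    obtain Ri where Ri: "Ri \<in> carrier_mat m m" "invertible_mat Ri" "R * Ri = 1\<^sub>m m" "Ri * R = 1\<^sub>m m"
      using inv_obtain[OF RST(1,2)] by metis
    obtain Si where Si: "Si \<in> carrier_mat n n" "invertible_mat Si" "S * Si = 1\<^sub>m n" "Si * S = 1\<^sub>m n"
      using inv_obtain[OF RST(3,4)] by metis
    obtain Ti where Ti: "Ti \<in> carrier_mat q q" "invertible_mat Ti" "T * Ti = 1\<^sub>m q" "Ti * T = 1\<^sub>m q"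
      using inv_obtain[OF RST(5,6)] by metis
    have e2: "eqb m n q (sdsum_zero r1 r2 r3 A') (TT m n q (sdsum_zero r1 r2 r3 B') Ri Si Ti)"
      using TT_inv[OF RST(1) Ri(1,3) RST(3) Si(1,3) RST(5) Ti(1,3) e] .
    have sB': "srank m n q (sdsum_zero r1 r2 r3 B') = (r1,r2,r3)" using sB eq by simp
    note b1 = blocks3[OF dA RST sA e]
    note b2 = blocks3[OF dA Ri(1,2) Si(1,2) Ti(1,2) sB' e2]
    note iR = sub_inv[OF dA(1) RST(1) Ri(1) Ri(3) Ri(4) b1(1) b2(1)]
    note iS = sub_inv[OF dA(2) RST(3) Si(1) Si(3) Si(4) b1(2) b2(2)]
    note iT = sub_inv[OF dA(3) RST(5) Ti(1) Ti(3) Ti(4) b1(3) b2(3)]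
    have "sequiv r1 r2 r3 A' B'"
      unfolding sequiv_def
      apply (rule exI[of _ "sub r1 R"], rule exI[of _ "sub r2 S"], rule exI[of _ "sub r3 T"])
      using iR iS iT restrict_equiv[OF dA e] by blast
    then show "(r1,r2,r3) = (s1,s2,s3) \<and> sequiv r1 r2 r3 A' B'" using rs by simp
  next
    assume h: "(r1,r2,r3) = (s1,s2,s3) \<and> sequiv r1 r2 r3 A' B'"
    then have eq: "s1 = r1" "s2 = r2" "s3 = r3" by auto
    have "sequiv m n q (sdsum_zero r1 r2 r3 A') (sdsum_zero r1 r2 r3 B')"
      using sd_equiv[OF dA] h by blast
    then show "sequiv m n q A B"
      using sequiv_trans[OF sequiv_trans[OF hA(2)] sequiv_sym[OF hB(2)]] eq by simp
  qed
qed

end
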